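(* Let $1\le m\le N-1$ be integers, let $A\subset\Lambda$ be a measurable set of positive measure, and let $\gamma:A\to(0,\infty)$ be measurable. If $$\rho^{(m+1)}(x_1,\dots,x_{m+1})\ge\gamma(x_{m+1})\,\rho^{(m)}(x_1,\dots,x_m)$$ for a.e. $(x_1,\dots,x_{m+1})\in\Lambda^m\times A$, then $$\rho^{(m)}(x_1,\dots,x_m)\ge\gamma(x_m)\,\rho^{(m-1)}(x_1,\dots,x_{m-1})$$ for a.e. $(x_1,\dots,x_m)\in\Lambda^{m-1}\times A$.
   Context: $(\Lambda;dx)$ is a complete $\sigma$-finite measure space with non-zero measure $dx$; $d^kx$ denotes the completion of $dx^{\otimes k}$ on $\Lambda^k$, and "a.e." refers to these measures. $N\ge2$ and $P$ is a symmetric probability density on $\Lambda^N$: a nonnegative, measurable, symmetric function with $\int_{\Lambda^N}P\,d^Nx=1$. For $1\le m<N$, the marginal density is $\rho^{(m)}(x_1,\dots,x_m):=\int_{\Lambda^{N-m}}P(x_1,\dots,x_m,x_{m+1},\dots,x_N)\,dx_{m+1}\cdots dx_N$ (defined a.e. on $\Lambda^m$). Conventions: $\rho^{(N)}:=P$ and $\rho^{(0)}:=1$. *)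

theory Defs
  imports "HOL-Analysis.Analysis" "HOL-Combinatorics.Permutations"
begin

text \<open>Points of the k-fold product are functions on the index set {..<k}
  (index i corresponds to the paper's x_(i+1)). The measure d^k x is the completion
  of the k-fold product measure.\<close>

definition prodc :: "'a measure \<Rightarrow> nat \<Rightarrow> (nat \<Rightarrow> 'a) measure" where
  "prodc M k = completion (PiM {..<k} (\<lambda>_. M))"

text \<open>Marginal density rho^(m) of P on Lambda^N: integrate out the coordinates m..N-1.
  For m = N this is P itself, for m = 0 it is the total integral of P.\<close>

definition marginal :: "'a measure \<Rightarrow> nat \<Rightarrow> ((nat \<Rightarrow> 'a) \<Rightarrow> real) \<Rightarrow> nat \<Rightarrow> (nat \<Rightarrow> 'a) \<Rightarrow> ennreal" where
  "marginal M N P m x =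
     (\<integral>\<^sup>+ y. ennreal (P (merge {..<m} {m..<N} (x, y))) \<partial>(completion (PiM {m..<N} (\<lambda>_. M))))"

definition sym_prob_density :: "'a measure \<Rightarrow> nat \<Rightarrow> ((nat \<Rightarrow> 'a) \<Rightarrow> real) \<Rightarrow> bool" where
  "sym_prob_density M N P \<longleftrightarrow>
     P \<in> borel_measurable (prodc M N) \<and>
     (\<forall>x \<in> space (prodc M N). 0 \<le> P x) \<and>
     (\<forall>\<sigma> x. \<sigma> permutes {..<N} \<longrightarrow> x \<in> space (prodc M N) \<longrightarrow> P (x \<circ> \<sigma>) = P x) \<and>
     (\<integral>\<^sup>+ x. ennreal (P x) \<partial>(prodc M N)) = 1"

end

theory Submission
  imports Defs
begin
lemma (in product_sigma_finite) distr_add_dim: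
  assumes "finite I" "i \<notin> I"
  shows "distr (Pi\<^sub>M I M \<Otimes>\<^sub>M M i) (Pi\<^sub>M (insert i I) M) (\<lambda>(f, y). f(i := y)) = Pi\<^sub>M (insert i I) M"
proof (rule PiM_eqI)
  interpret I: finite_product_sigma_finite M I by standard fact
  interpret P: pair_sigma_finite "Pi\<^sub>M I M" "M i" by standard
  fix A assume A: "\<And>j. j \<in> insert i I \<Longrightarrow> A j \<in> sets (M j)"
  have *: "(\<lambda>(f, y). f(i := y)) -` Pi\<^sub>E (insert i I) A \<inter> space (Pi\<^sub>M I M \<Otimes>\<^sub>M M i) = Pi\<^sub>E I A \<times> A i"
    using A[THEN sets.sets_into_space] assms(2)
    by (auto simp: space_PiM space_pair_measure PiE_iff extensional_def split: if_splits)
  have s1: "Pi\<^sub>E I A \<in> sets (Pi\<^sub>M I M)" using A by (auto intro!: sets_PiM_I_finite assms)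
  have s2: "A i \<in> sets (M i)" using A by simp
  have "emeasure (distr (Pi\<^sub>M I M \<Otimes>\<^sub>M M i) (Pi\<^sub>M (insert i I) M) (\<lambda>(f, y). f(i := y))) (Pi\<^sub>E (insert i I) A)
     = emeasure (Pi\<^sub>M I M \<Otimes>\<^sub>M M i) (Pi\<^sub>E I A \<times> A i)"
    using A by (subst emeasure_distr) (auto simp: * intro!: sets_PiM_I_finite assms)
  also have "\<dots> = emeasure (Pi\<^sub>M I M) (Pi\<^sub>E I A) * emeasure (M i) (A i)"
    by (rule sigma_finite_measure.emeasure_pair_measure_Times[OF sigma_finite_measures s1 s2])
  also have "\<dots> = (\<Prod>j\<in>insert i I. emeasure (M j) (A j))"
    using A assms by (simp add: I.measure_times mult.commute)
  finally show "emeasure (distr (Pi\<^sub>M I M \<Otimes>\<^sub>M M i) (Pi\<^sub>M (insert i I) M) (\<lambda>(f, y). f(i := y))) (Pi\<^sub>E (insert i I) A) =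
      (\<Prod>j\<in>insert i I. emeasure (M j) (A j))" .
qed (use assms in simp_all)

lemma (in product_sigma_finite) AE_split1:
  assumes "finite I" "i \<notin> I" "AE x in Pi\<^sub>M (insert i I) M. Q x"
  shows "AE f in Pi\<^sub>M I M. AE y in M i. Q (f(i := y))"
proof -
  interpret I: finite_product_sigma_finite M I by standard fact
  interpret P: pair_sigma_finite "Pi\<^sub>M I M" "M i" by standard
  have "AE x in distr (Pi\<^sub>M I M \<Otimes>\<^sub>M M i) (Pi\<^sub>M (insert i I) M) (\<lambda>(f, y). f(i := y)). Q x"
    by (subst distr_add_dim[OF assms(1,2)]) (rule assms(3))
  from AE_distrD[OF measurable_add_dim this]
  have "AE p in Pi\<^sub>M I M \<Otimes>\<^sub>M M i. Q ((fst p)(i := snd p))"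
    by (simp add: case_prod_beta)
  from P.AE_pair[OF this] show ?thesis by simp
qed

lemma (in product_sigma_finite) AE_split2:
  assumes "finite I" "i \<notin> I" "AE x in Pi\<^sub>M (insert i I) M. Q x"
  shows "AE y in M i. AE f in Pi\<^sub>M I M. Q (f(i := y))"
proof -
  interpret I: finite_product_sigma_finite M I by standard fact
  interpret P: pair_sigma_finite "Pi\<^sub>M I M" "M i" by standard
  interpret P2: pair_sigma_finite "M i" "Pi\<^sub>M I M" by standard
  have "AE x in distr (Pi\<^sub>M I M \<Otimes>\<^sub>M M i) (Pi\<^sub>M (insert i I) M) (\<lambda>(f, y). f(i := y)). Q x"
    by (subst distr_add_dim[OF assms(1,2)]) (rule assms(3))
  also have "distr (Pi\<^sub>M I M \<Otimes>\<^sub>M M i) (Pi\<^sub>M (insert i I) M) (\<lambda>(f, y). f(i := y))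
     = distr (distr (M i \<Otimes>\<^sub>M Pi\<^sub>M I M) (Pi\<^sub>M I M \<Otimes>\<^sub>M M i) (\<lambda>(x, y). (y, x))) (Pi\<^sub>M (insert i I) M) (\<lambda>(f, y). f(i := y))"
    by (subst P.distr_pair_swap) (rule refl)
  also have "\<dots> = distr (M i \<Otimes>\<^sub>M Pi\<^sub>M I M) (Pi\<^sub>M (insert i I) M) (\<lambda>(y, f). f(i := y))"
    apply (subst distr_distr)
      apply (auto intro!: measurable_pair_swap')[2]
    apply (rule distr_cong)
      apply (auto simp: comp_def case_prod_beta)
    done
  finally have "AE x in distr (M i \<Otimes>\<^sub>M Pi\<^sub>M I M) (Pi\<^sub>M (insert i I) M) (\<lambda>(y, f). f(i := y)). Q x" .
  from AE_distrD[OF _ this]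
  have "AE p in M i \<Otimes>\<^sub>M Pi\<^sub>M I M. Q ((snd p)(i := fst p))"
    by (simp add: case_prod_beta) measurable
  from P2.AE_pair[OF this] show ?thesis by simp
qed

lemma (in product_sigma_finite) AE_merge:
  assumes "I \<inter> J = {}" "finite I" "finite J" "AE x in Pi\<^sub>M (I \<union> J) M. Q x"
  shows "AE x in Pi\<^sub>M I M. AE y in Pi\<^sub>M J M. Q (merge I J (x, y))"
proof -
  interpret I: finite_product_sigma_finite M I by standard fact
  interpret J: finite_product_sigma_finite M J by standard fact
  interpret P: pair_sigma_finite "Pi\<^sub>M I M" "Pi\<^sub>M J M" by standard
  have "AE x in distr (Pi\<^sub>M I M \<Otimes>\<^sub>M Pi\<^sub>M J M) (Pi\<^sub>M (I \<union> J) M) (merge I J). Q x"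
    by (subst distr_merge[OF assms(1,2,3)]) (rule assms(4))
  from AE_distrD[OF measurable_merge this]
  have "AE p in Pi\<^sub>M I M \<Otimes>\<^sub>M Pi\<^sub>M J M. Q (merge I J p)" .
  from P.AE_pair[OF this] show ?thesis by simp
qed

lemma (in product_sigma_finite) lower_insert:
  assumes "finite I" "i \<notin> I"
  shows "integral\<^sup>N (Pi\<^sub>M (insert i I) M) f \<le> (\<integral>\<^sup>+ y. (\<integral>\<^sup>+ x. f (x(i := y)) \<partial>(Pi\<^sub>M I M)) \<partial>(M i))"
  unfolding nn_integral_def[of "Pi\<^sub>M (insert i I) M" f]
proof (rule SUP_least, clarsimp)
  fix g assume g: "simple_function (Pi\<^sub>M (insert i I) M) g" "g \<le> f"
  have "integral\<^sup>S (Pi\<^sub>M (insert i I) M) g = integral\<^sup>N (Pi\<^sub>M (insert i I) M) g"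
    using g by (simp add: nn_integral_eq_simple_integral)
  also have "\<dots> = (\<integral>\<^sup>+ y. (\<integral>\<^sup>+ x. g (x(i := y)) \<partial>(Pi\<^sub>M I M)) \<partial>(M i))"
    using g assms by (intro product_nn_integral_insert_rev) (auto intro: borel_measurable_simple_function)
  also have "\<dots> \<le> (\<integral>\<^sup>+ y. (\<integral>\<^sup>+ x. f (x(i := y)) \<partial>(Pi\<^sub>M I M)) \<partial>(M i))"
    using g(2) by (intro nn_integral_mono) (auto simp: le_fun_def)
  finally show "integral\<^sup>S (Pi\<^sub>M (insert i I) M) g \<le> (\<integral>\<^sup>+ y. (\<integral>\<^sup>+ x. f (x(i := y)) \<partial>(Pi\<^sub>M I M)) \<partial>(M i))" .
qed

lemma lower_cmult:
  "c * integral\<^sup>N M f \<le> (\<integral>\<^sup>+ x. c * f x \<partial>M)"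
  unfolding nn_integral_def[of M f] SUP_mult_left_ennreal
proof (rule SUP_least, clarsimp)
  fix g assume g: "simple_function M g" "g \<le> f"
  have "c * integral\<^sup>S M g = integral\<^sup>S M (\<lambda>x. c * g x)" using g by simp
  also have "\<dots> = integral\<^sup>N M (\<lambda>x. c * g x)"
    using g by (simp add: nn_integral_eq_simple_integral)
  also have "\<dots> \<le> (\<integral>\<^sup>+ x. c * f x \<partial>M)"
    using g(2) by (intro nn_integral_mono mult_left_mono) (auto simp: le_fun_def)
  finally show "c * integral\<^sup>S M g \<le> (\<integral>\<^sup>+ x. c * f x \<partial>M)" .
qed

lemma perm_measurable:
  assumes p: "\<sigma> permutes I"
  shows "(\<lambda>x. x \<circ> \<sigma>) \<in> measurable (Pi\<^sub>M I (\<lambda>_. M)) (Pi\<^sub>M I (\<lambda>_. M))"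
proof -
  have "(\<lambda>x i. x (\<sigma> i)) \<in> measurable (Pi\<^sub>M I (\<lambda>_. M)) (Pi\<^sub>M I (\<lambda>_. M))"
  proof (rule measurable_PiM_single')
    fix i assume "i \<in> I"
    then have "\<sigma> i \<in> I" using p by (simp add: permutes_in_image)
    then show "(\<lambda>x. x (\<sigma> i)) \<in> measurable (Pi\<^sub>M I (\<lambda>_. M)) M"
      by (simp add: measurable_component_singleton)
  next
    show "(\<lambda>x i. x (\<sigma> i)) \<in> space (Pi\<^sub>M I (\<lambda>_. M)) \<rightarrow> (\<Pi>\<^sub>E i\<in>I. space M)"
      using p by (auto simp: space_PiM PiE_iff extensional_def permutes_not_in permutes_in_image)
  qed
  then show ?thesis by (simp add: comp_def)
qed

lemma perm_PiM:
  assumes sf: "sigma_finite_measure M" and fin: "finite I" and p: "\<sigma> permutes I"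
  shows "distr (Pi\<^sub>M I (\<lambda>_. M)) (Pi\<^sub>M I (\<lambda>_. M)) (\<lambda>x. x \<circ> \<sigma>) = Pi\<^sub>M I (\<lambda>_. M)"
proof -
  interpret S: product_sigma_finite "\<lambda>_. M" using sf by (simp add: product_sigma_finite_def)
  have meas: "(\<lambda>x. x \<circ> \<sigma>) \<in> measurable (Pi\<^sub>M I (\<lambda>_. M)) (Pi\<^sub>M I (\<lambda>_. M))"
  proof -
    have "(\<lambda>x i. x (\<sigma> i)) \<in> measurable (Pi\<^sub>M I (\<lambda>_. M)) (Pi\<^sub>M I (\<lambda>_. M))"
    proof (rule measurable_PiM_single')
      fix i assume "i \<in> I"
      then have "\<sigma> i \<in> I" using p by (simp add: permutes_in_image)
      then show "(\<lambda>x. x (\<sigma> i)) \<in> measurable (Pi\<^sub>M I (\<lambda>_. M)) M"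
        by (simp add: measurable_component_singleton)
    next
      show "(\<lambda>x i. x (\<sigma> i)) \<in> space (Pi\<^sub>M I (\<lambda>_. M)) \<rightarrow> (\<Pi>\<^sub>E i\<in>I. space M)"
        using p by (auto simp: space_PiM PiE_iff extensional_def permutes_not_in permutes_in_image)
    qed
    then show ?thesis by (simp add: comp_def)
  qed
  show ?thesis
  proof (rule S.PiM_eqI[OF fin])
    fix A assume A: "\<And>i. i \<in> I \<Longrightarrow> A i \<in> sets M"
    have inv: "inv \<sigma> permutes I" using p by (rule permutes_inv)
    have *: "(\<lambda>x. x \<circ> \<sigma>) -` Pi\<^sub>E I A \<inter> space (Pi\<^sub>M I (\<lambda>_. M)) = Pi\<^sub>E I (\<lambda>j. A (inv \<sigma> j))"
    proof (intro equalityI subsetI)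
      fix x assume "x \<in> (\<lambda>x. x \<circ> \<sigma>) -` Pi\<^sub>E I A \<inter> space (Pi\<^sub>M I (\<lambda>_. M))"
      then have x: "x \<circ> \<sigma> \<in> Pi\<^sub>E I A" "x \<in> space (Pi\<^sub>M I (\<lambda>_. M))" by auto
      show "x \<in> Pi\<^sub>E I (\<lambda>j. A (inv \<sigma> j))"
      proof (rule PiE_I)
        fix j assume j: "j \<in> I"
        then have "inv \<sigma> j \<in> I" using inv by (simp add: permutes_in_image)
        then have "(x \<circ> \<sigma>) (inv \<sigma> j) \<in> A (inv \<sigma> j)" using x(1) by auto
        then show "x j \<in> A (inv \<sigma> j)" using p by (simp add: permutes_inverses)
      next
        fix j assume "j \<notin> I" then show "x j = undefined"
          using x(2) by (auto simp: space_PiM PiE_iff extensional_def)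
      qed
    next
      fix x assume x: "x \<in> Pi\<^sub>E I (\<lambda>j. A (inv \<sigma> j))"
      have "x \<circ> \<sigma> \<in> Pi\<^sub>E I A"
      proof (rule PiE_I)
        fix i assume i: "i \<in> I"
        then have "\<sigma> i \<in> I" using p by (simp add: permutes_in_image)
        then have "x (\<sigma> i) \<in> A (inv \<sigma> (\<sigma> i))" using x by auto
        then show "(x \<circ> \<sigma>) i \<in> A i" using p by (simp add: permutes_inverses)
      next
        fix i assume "i \<notin> I" then show "(x \<circ> \<sigma>) i = undefined"
          using x p by (auto simp: PiE_iff extensional_def permutes_not_in)
      qed
      moreover have "x \<in> space (Pi\<^sub>M I (\<lambda>_. M))"
        using x A[THEN sets.sets_into_space] inv
        by (auto simp: space_PiM PiE_iff permutes_in_image) (meson permutes_in_image subsetD)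
      ultimately show "x \<in> (\<lambda>x. x \<circ> \<sigma>) -` Pi\<^sub>E I A \<inter> space (Pi\<^sub>M I (\<lambda>_. M))" by simp
    qed
    have "emeasure (distr (Pi\<^sub>M I (\<lambda>_. M)) (Pi\<^sub>M I (\<lambda>_. M)) (\<lambda>x. x \<circ> \<sigma>)) (Pi\<^sub>E I A)
        = emeasure (Pi\<^sub>M I (\<lambda>_. M)) (Pi\<^sub>E I (\<lambda>j. A (inv \<sigma> j)))"
      using A by (subst emeasure_distr[OF meas]) (auto simp: * intro!: sets_PiM_I_finite fin)
    also have "\<dots> = (\<Prod>j\<in>I. emeasure M (A (inv \<sigma> j)))"
      using A inv by (subst S.emeasure_PiM[OF fin]) (auto simp: permutes_in_image)
    also have "\<dots> = (\<Prod>i\<in>I. emeasure M (A i))"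
      using prod.reindex_bij_betw[OF permutes_imp_bij[OF inv], of "\<lambda>i. emeasure M (A i)"] .
    finally show "emeasure (distr (Pi\<^sub>M I (\<lambda>_. M)) (Pi\<^sub>M I (\<lambda>_. M)) (\<lambda>x. x \<circ> \<sigma>)) (Pi\<^sub>E I A) =
      (\<Prod>i\<in>I. emeasure M (A i))" .
  qed simp
qed


lemma marginal_eq:
  "marginal M N P j x = (\<integral>\<^sup>+ y. ennreal (P (merge {..<j} {j..<N} (x, y))) \<partial>Pi\<^sub>M {j..<N} (\<lambda>_. M))"
  unfolding marginal_def nn_integral_completion ..

lemma merge_shift:
  "j < N \<Longrightarrow> merge {..<j} {j..<N} (x, y(j := s)) = merge {..<Suc j} {Suc j..<N} (x(j := s), y)"
  by (auto simp: merge_def fun_eq_iff)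

lemma marginal_local:
  "(\<And>i. i < j \<Longrightarrow> x i = y i) \<Longrightarrow> marginal M N P j x = marginal M N P j y"
  unfolding marginal_def
  by (intro nn_integral_cong arg_cong[where f=ennreal] arg_cong[where f=P]) (auto simp: merge_def fun_eq_iff)

theorem lemma3:
  fixes M :: "'a measure" and N m :: nat and P :: "(nat \<Rightarrow> 'a) \<Rightarrow> real"
    and A :: "'a set" and \<gamma> :: "'a \<Rightarrow> real"
  assumes "sigma_finite_measure M" and "complete_measure M"
    and "emeasure M (space M) \<noteq> 0"
    and "2 \<le> N"
    and "sym_prob_density M N P"
    and "1 \<le> m" and "m \<le> N - 1"
    and "A \<in> sets M" and "emeasure M A > 0"
    and "\<gamma> \<in> borel_measurable (restrict_space M A)" and "\<forall>a\<in>A. \<gamma> a > 0"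
    and "AE x in prodc M (Suc m). x m \<in> A \<longrightarrow>
           marginal M N P (Suc m) x \<ge> ennreal (\<gamma> (x m)) * marginal M N P m x"
  shows "AE x in prodc M m. x (m - 1) \<in> A \<longrightarrow>
           marginal M N P m x \<ge> ennreal (\<gamma> (x (m - 1))) * marginal M N P (m - 1) x"
proof -
  obtain k where mk: "m = Suc k" using assms(6) by (cases m) auto
  have kN: "Suc (Suc k) \<le> N" using assms(7) mk assms(4) by simp
  interpret S: product_sigma_finite "\<lambda>_::nat. M"
    using assms(1) by (simp add: product_sigma_finite_def)
  define marg where "marg = marginal M N P"
  note sp = assms(5)[unfolded sym_prob_density_def]
  have Pmeas: "P \<in> borel_measurable (completion (Pi\<^sub>M {..<N} (\<lambda>_. M)))"
    using sp by (simp add: prodc_def)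
  obtain P' where P'm: "P' \<in> borel_measurable (Pi\<^sub>M {..<N} (\<lambda>_. M))"
    and P'ae: "AE x in Pi\<^sub>M {..<N} (\<lambda>_. M). P x = P' x"
    using completion_ex_borel_measurable_real[OF Pmeas] by blast
  define \<tau> where "\<tau> = Transposition.transpose k (Suc k)"
  have \<tau>p: "\<tau> permutes {..<Suc (Suc k)}" unfolding \<tau>_def by (rule permutes_swap_id) auto
  have \<tau>N: "\<tau> permutes {..<N}" unfolding \<tau>_def using kN by (intro permutes_swap_id) auto
  have un: "{..<Suc k} \<union> {Suc k..<N} = {..<N}" using kN by auto

  have G: "AE x in Pi\<^sub>M {..<Suc k} (\<lambda>_. M). AE w in Pi\<^sub>M {Suc k..<N} (\<lambda>_. M).
      P (merge {..<Suc k} {Suc k..<N} (x, w)) = P' (merge {..<Suc k} {Suc k..<N} (x, w))"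
  proof -
    have disj: "{..<Suc k} \<inter> {Suc k..<N} = {}" by auto
    show ?thesis using S.AE_merge[OF disj _ _, unfolded un, OF _ _ P'ae] by simp
  qed

  have F4: "marg (Suc k) x = (\<integral>\<^sup>+ s. marg (Suc (Suc k)) (x(Suc k := s)) \<partial>M)"
    if x: "x \<in> space (Pi\<^sub>M {..<Suc k} (\<lambda>_. M))"
      and Gx: "AE w in Pi\<^sub>M {Suc k..<N} (\<lambda>_. M).
      P (merge {..<Suc k} {Suc k..<N} (x, w)) = P' (merge {..<Suc k} {Suc k..<N} (x, w))" for x
  proof -
    have ins: "insert (Suc k) {Suc (Suc k)..<N} = {Suc k..<N}" using kN by auto
    have mm: "(\<lambda>w. merge {..<Suc k} {Suc k..<N} (x, w)) \<in> measurable (Pi\<^sub>M {Suc k..<N} (\<lambda>_. M)) (Pi\<^sub>M {..<N} (\<lambda>_. M))"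
      using measurable_compose[OF measurable_Pair1'[OF x] measurable_merge[of "{..<Suc k}" "{Suc k..<N}" "\<lambda>_. M"]] un
      by (simp add: comp_def)
    have fm0: "(\<lambda>w. P' (merge {..<Suc k} {Suc k..<N} (x, w))) \<in> borel_measurable (Pi\<^sub>M {Suc k..<N} (\<lambda>_. M))"
      using measurable_compose[OF mm P'm] by (simp add: comp_def)
    then have fm: "(\<lambda>w. ennreal (P' (merge {..<Suc k} {Suc k..<N} (x, w)))) \<in> borel_measurable (Pi\<^sub>M {Suc k..<N} (\<lambda>_. M))"
      by measurable
    have "marg (Suc k) x = (\<integral>\<^sup>+ w. ennreal (P' (merge {..<Suc k} {Suc k..<N} (x, w))) \<partial>Pi\<^sub>M {Suc k..<N} (\<lambda>_. M))"
      unfolding marg_def marginal_eq by (rule nn_integral_cong_AE) (use Gx in \<open>auto elim!: eventually_mono\<close>)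
    also have "\<dots> = (\<integral>\<^sup>+ s. (\<integral>\<^sup>+ y. ennreal (P' (merge {..<Suc k} {Suc k..<N} (x, y(Suc k := s)))) \<partial>Pi\<^sub>M {Suc (Suc k)..<N} (\<lambda>_. M)) \<partial>M)"
      using S.product_nn_integral_insert_rev[of "{Suc (Suc k)..<N}" "Suc k" "\<lambda>w. ennreal (P' (merge {..<Suc k} {Suc k..<N} (x, w)))", unfolded ins, OF _ _ fm]
      by simp
    also have "\<dots> = (\<integral>\<^sup>+ s. marg (Suc (Suc k)) (x(Suc k := s)) \<partial>M)"
    proof (rule nn_integral_cong_AE)
      have "AE s in M. AE y in Pi\<^sub>M {Suc (Suc k)..<N} (\<lambda>_. M).
          P (merge {..<Suc k} {Suc k..<N} (x, y(Suc k := s))) = P' (merge {..<Suc k} {Suc k..<N} (x, y(Suc k := s)))"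
        using S.AE_split2[of "{Suc (Suc k)..<N}" "Suc k"
            "\<lambda>w. P (merge {..<Suc k} {Suc k..<N} (x, w)) = P' (merge {..<Suc k} {Suc k..<N} (x, w))", unfolded ins, OF _ _ Gx]
        by simp
      then show "AE s in M. (\<integral>\<^sup>+ y. ennreal (P' (merge {..<Suc k} {Suc k..<N} (x, y(Suc k := s)))) \<partial>Pi\<^sub>M {Suc (Suc k)..<N} (\<lambda>_. M))
          = marg (Suc (Suc k)) (x(Suc k := s))"
      proof eventually_elim
        case (elim s)
        have eq: "\<And>y. merge {..<Suc k} {Suc k..<N} (x, y(Suc k := s)) = merge {..<Suc (Suc k)} {Suc (Suc k)..<N} (x(Suc k := s), y)"
          using merge_shift[of "Suc k" N] kN by simp
        show ?case unfolding marg_def marginal_eq using elim unfolding eq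
          by (intro nn_integral_cong_AE) (auto elim!: eventually_mono)
      qed
    qed
    finally show ?thesis .
  qed

  have F5: "c * marg k x \<le> (\<integral>\<^sup>+ s. c * marg (Suc k) (x(k := s)) \<partial>M)" for x c
  proof -
    have ins0: "insert k {Suc k..<N} = {k..<N}" using kN by auto
    have "marg k x = (\<integral>\<^sup>+ w. ennreal (P (merge {..<k} {k..<N} (x, w))) \<partial>Pi\<^sub>M (insert k {Suc k..<N}) (\<lambda>_. M))"
      by (simp add: marg_def marginal_eq ins0)
    also have "\<dots> \<le> (\<integral>\<^sup>+ s. (\<integral>\<^sup>+ y. ennreal (P (merge {..<k} {k..<N} (x, y(k := s)))) \<partial>Pi\<^sub>M {Suc k..<N} (\<lambda>_. M)) \<partial>M)"
      by (rule S.lower_insert) auto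
    also have "\<dots> = (\<integral>\<^sup>+ s. marg (Suc k) (x(k := s)) \<partial>M)"
    proof -
      have eq: "\<And>y s. merge {..<k} {k..<N} (x, y(k := s)) = merge {..<Suc k} {Suc k..<N} (x(k := s), y)"
        using merge_shift[of k N] kN by simp
      show ?thesis unfolding eq by (simp add: marg_def marginal_eq)
    qed
    finally have "c * marg k x \<le> c * (\<integral>\<^sup>+ s. marg (Suc k) (x(k := s)) \<partial>M)"
      by (rule mult_left_mono) simp
    also have "\<dots> \<le> (\<integral>\<^sup>+ s. c * marg (Suc k) (x(k := s)) \<partial>M)"
      by (rule lower_cmult)
    finally show ?thesis .
  qed

  have F2: "marg (Suc (Suc k)) (x \<circ> \<tau>) = marg (Suc (Suc k)) x"
    if x: "x \<in> space (Pi\<^sub>M {..<Suc (Suc k)} (\<lambda>_. M))" for x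
    unfolding marg_def marginal_eq
  proof (rule nn_integral_cong)
    fix y assume y: "y \<in> space (Pi\<^sub>M {Suc (Suc k)..<N} (\<lambda>_. M))"
    have eq: "merge {..<Suc (Suc k)} {Suc (Suc k)..<N} (x \<circ> \<tau>, y) = merge {..<Suc (Suc k)} {Suc (Suc k)..<N} (x, y) \<circ> \<tau>"
      unfolding \<tau>_def by (auto simp: merge_def fun_eq_iff Transposition.transpose_def)
    have "merge {..<Suc (Suc k)} {Suc (Suc k)..<N} (x, y) \<in> space (prodc M N)"
      using x y kN by (auto simp: prodc_def space_PiM PiE_iff merge_def extensional_def)
    then show "ennreal (P (merge {..<Suc (Suc k)} {Suc (Suc k)..<N} (x \<circ> \<tau>, y))) =
        ennreal (P (merge {..<Suc (Suc k)} {Suc (Suc k)..<N} (x, y)))"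
      using sp \<tau>N unfolding eq by auto
  qed

  have H0: "AE x in Pi\<^sub>M {..<Suc (Suc k)} (\<lambda>_. M). x (Suc k) \<in> A \<longrightarrow>
      marg (Suc (Suc k)) x \<ge> ennreal (\<gamma> (x (Suc k))) * marg (Suc k) x"
    using assms(12) unfolding prodc_def AE_completion_iff marg_def[symmetric] mk .
  then have "AE x in distr (Pi\<^sub>M {..<Suc (Suc k)} (\<lambda>_. M)) (Pi\<^sub>M {..<Suc (Suc k)} (\<lambda>_. M)) (\<lambda>x. x \<circ> \<tau>).
      x (Suc k) \<in> A \<longrightarrow> marg (Suc (Suc k)) x \<ge> ennreal (\<gamma> (x (Suc k))) * marg (Suc k) x"
    by (subst perm_PiM[OF assms(1) _ \<tau>p]) auto
  from AE_distrD[OF perm_measurable[OF \<tau>p] this]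
  have H1: "AE x in Pi\<^sub>M {..<Suc (Suc k)} (\<lambda>_. M). (x \<circ> \<tau>) (Suc k) \<in> A \<longrightarrow>
      marg (Suc (Suc k)) (x \<circ> \<tau>) \<ge> ennreal (\<gamma> ((x \<circ> \<tau>) (Suc k))) * marg (Suc k) (x \<circ> \<tau>)" .
  have H2: "AE x in Pi\<^sub>M {..<Suc (Suc k)} (\<lambda>_. M). x k \<in> A \<longrightarrow>
      marg (Suc (Suc k)) x \<ge> ennreal (\<gamma> (x k)) * marg (Suc k) (x \<circ> \<tau>)"
    using H1 AE_space
  proof eventually_elim
    case (elim x)
    have "(x \<circ> \<tau>) (Suc k) = x k" by (simp add: \<tau>_def)
    then show ?case using elim F2[of x] by simp
  qed
  have H3: "AE x in Pi\<^sub>M {..<Suc k} (\<lambda>_. M). AE s in M. x k \<in> A \<longrightarrow>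
      marg (Suc (Suc k)) (x(Suc k := s)) \<ge> ennreal (\<gamma> (x k)) * marg (Suc k) (x(k := s))"
  proof -
    have "AE x in Pi\<^sub>M {..<Suc k} (\<lambda>_. M). AE s in M. (x(Suc k := s)) k \<in> A \<longrightarrow>
      marg (Suc (Suc k)) (x(Suc k := s)) \<ge> ennreal (\<gamma> ((x(Suc k := s)) k)) * marg (Suc k) (x(Suc k := s) \<circ> \<tau>)"
    proof -
      have ins2: "insert (Suc k) {..<Suc k} = {..<Suc (Suc k)}" by auto
      show ?thesis using S.AE_split1[of "{..<Suc k}" "Suc k", unfolded ins2, OF _ _ H2] by simp
    qed
    moreover have "marg (Suc k) (x(Suc k := s) \<circ> \<tau>) = marg (Suc k) (x(k := s))" for x s
      unfolding marg_def by (rule marginal_local) (auto simp: \<tau>_def)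
    ultimately show ?thesis by simp
  qed

  have "AE x in Pi\<^sub>M {..<Suc k} (\<lambda>_. M). x k \<in> A \<longrightarrow>
      marg (Suc k) x \<ge> ennreal (\<gamma> (x k)) * marg k x"
    using H3 G AE_space
  proof eventually_elim
    case (elim x)
    show ?case
    proof
      assume xA: "x k \<in> A"
      have "ennreal (\<gamma> (x k)) * marg k x \<le> (\<integral>\<^sup>+ s. ennreal (\<gamma> (x k)) * marg (Suc k) (x(k := s)) \<partial>M)"
        by (rule F5)
      also have "\<dots> \<le> (\<integral>\<^sup>+ s. marg (Suc (Suc k)) (x(Suc k := s)) \<partial>M)"
        by (rule nn_integral_mono_AE, rule eventually_mono[OF elim(1)]) (use xA in auto)
      also have "\<dots> = marg (Suc k) x"
        using F4 elim(2,3) by simp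
      finally show "ennreal (\<gamma> (x k)) * marg k x \<le> marg (Suc k) x" .
    qed
  qed
  then show ?thesis
    unfolding prodc_def AE_completion_iff marg_def mk by simp
qed

end
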